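(* For integers $n\ge 2$ let $F_{2,n}(q)=(q-1)^{n-1}+(q-2)^n\in\mathbb{Z}[q]$. Then for every integer $k\ge 1$, the polynomial $F_{2,2}(q)$ divides $F_{2,6k+2}(q)$.
   Context: $F_{2,n}(q)$ is the factor satisfying $P_{K_{2,n}}(q)=q(q-1)F_{2,n}(q)$, where $P_{K_{2,n}}$ is the chromatic polynomial of the complete bipartite graph $K_{2,n}$. *)

theory Defs
  imports "HOL-Computational_Algebra.Polynomial"
begin

definition F2 :: "nat \<Rightarrow> int poly" where
  "F2 n = [:-1, 1:] ^ (n - 1) + [:-2, 1:] ^ n"

end

theory Submission
  imports Defs
begin

lemma diff_dvd_pow_diff:
  fixes x y :: "'a :: comm_ring_1"
  shows "x - y dvd x ^ n - y ^ n"
proof (induction n)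
  case 0 then show ?case by simp
next
  case (Suc n)
  have "x ^ Suc n - y ^ Suc n = x * (x ^ n - y ^ n) + (x - y) * y ^ n"
    by (simp add: algebra_simps)
  then show ?case using Suc by (simp add: dvd_add dvd_mult)
qed

theorem proposition4:
  fixes k :: nat
  assumes "k \<ge> 1"
  shows "F2 2 dvd F2 (6 * k + 2)"
proof -
  define a :: "int poly" where "a = [:-1, 1:]"
  define b :: "int poly" where "b = [:-2, 1:]"
  define m where "m = F2 2"
  have ab: "a = b + 1" unfolding a_def b_def by (simp add: one_pCons)
  have m: "m = a + b ^ 2" unfolding m_def F2_def a_def b_def by simp
  have b3: "b ^ 3 - 1 = (b - 1) * m" unfolding m ab by (simp add: algebra_simps power2_eq_square power3_eq_cube)
  have mb3: "m dvd b ^ 3 - 1" using b3 by simp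
  have "b ^ 3 - 1 dvd (b ^ 3) ^ (2*k) - 1 ^ (2*k)" by (rule diff_dvd_pow_diff)
  moreover have "(b ^ 3) ^ (2*k) = b ^ (6*k)" by (simp add: power_mult[symmetric])
  ultimately have mb: "m dvd b ^ (6*k) - 1"
    using mb3 by (metis dvd_trans power_one)
  have "b ^ 3 - 1 dvd (b ^ 3) ^ (4*k) - 1 ^ (4*k)" by (rule diff_dvd_pow_diff)
  moreover have "(b ^ 3) ^ (4*k) = b ^ (12*k)" by (simp add: power_mult[symmetric])
  ultimately have mb12: "m dvd b ^ (12*k) - 1"
    using mb3 by (metis dvd_trans power_one)
  have "a - (- (b^2)) dvd a ^ (6*k) - (- (b^2)) ^ (6*k)" by (rule diff_dvd_pow_diff)
  moreover have "(- (b^2)) ^ (6*k) = b ^ (12*k)"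
    by (simp add: power_mult[symmetric] power_minus_even)
  ultimately have ma1: "m dvd a ^ (6*k) - b ^ (12*k)"
    by (simp add: m)
  have ma: "m dvd a ^ (6*k) - 1"
  proof -
    have "a ^ (6*k) - 1 = (a ^ (6*k) - b ^ (12*k)) + (b ^ (12*k) - 1)" by simp
    thus ?thesis using ma1 mb12 by (metis dvd_add)
  qed
  have F: "F2 (6*k+2) = a * (a ^ (6*k) - 1) + b^2 * (b ^ (6*k) - 1) + m"
  proof -
    have "F2 (6*k+2) = a ^ (6*k+1) + b ^ (6*k+2)" unfolding F2_def a_def b_def by simp
    thus ?thesis unfolding m by (simp add: algebra_simps power_add power2_eq_square)
  qed
  show ?thesis unfolding m_def[symmetric] F
    using ma mb by (simp add: dvd_add dvd_mult)
qed

end
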